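(* Let $\Gamma$ be a cubic distance-regular graph of diameter $D$ with intersection array $\{b_0,\dots,b_{D-1};c_1,\dots,c_D\}$, and let $(u_{ij})$ be the generators of $C(G_{aut}^+(\Gamma))$. Let $2\le m\le D$ and assume $u_{ij}u_{kl}=u_{kl}u_{ij}$ for all vertices with $d(i,k)=d(j,l)\le m-1$. If either (i) $b_{m-1}=1$, or (ii) $m<D$, $b_{m-1}=2$, $b_m=c_m=1$ and the girth satisfies $g(\Gamma)\ge 2m$, then $u_{ij}u_{kl}=u_{kl}u_{ij}$ for all vertices with $d(i,k)=d(j,l)=m$.
   Context: A connected regular graph $\Gamma=(V,E)$ of diameter $D$ is distance-regular with intersection array $\{b_0,\dots,b_{D-1};c_1,\dots,c_D\}$ if for any vertices $v,w$ with $d(v,w)=i$, exactly $b_i$ neighbors of $w$ are at distance $i+1$ from $v$ and exactly $c_i$ neighbors of $w$ are at distance $i-1$ from $v$ ($d$ the graph distance). Cubic means $3$-regular; the girth is the length of a shortest cycle. $C(G_{aut}^+(\Gamma))$ is the universal unital $C^*$-algebra generated by $u_{ij}$, $i,j\in V=\{1,\dots,n\}$, with relations: (R1) $u_{ij}=u_{ij}^*=u_{ij}^2$; (R2) $\sum_{l} u_{il}=1=\sum_{l} u_{li}$ for all $i$; (R3) $u_{ij}u_{kl}=u_{kl}u_{ij}=0$ whenever exactly one of $(i,k)\in E$, $(j,l)\in E$ holds. *)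

theory Defs
  imports Complex_Main "HOL-Library.Extended_Nat"
begin

class cstar_algebra = real_normed_algebra_1 + banach +
  fixes scaleC :: "complex \<Rightarrow> 'a \<Rightarrow> 'a"
    and cstar :: "'a \<Rightarrow> 'a"
  assumes scaleC_add_right: "scaleC a (x + y) = scaleC a x + scaleC a y"
    and scaleC_add_left: "scaleC (a + b) x = scaleC a x + scaleC b x"
    and scaleC_scaleC: "scaleC a (scaleC b x) = scaleC (a * b) x"
    and scaleC_one: "scaleC 1 x = x"
    and scaleR_scaleC: "scaleR r x = scaleC (complex_of_real r) x"
    and scaleC_mult_left: "scaleC a x * y = scaleC a (x * y)"
    and scaleC_mult_right: "x * scaleC a y = scaleC a (x * y)"
    and norm_scaleC: "norm (scaleC a x) = cmod a * norm x"
    and cstar_cstar: "cstar (cstar x) = x"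
    and cstar_add: "cstar (x + y) = cstar x + cstar y"
    and cstar_scaleC: "cstar (scaleC a x) = scaleC (cnj a) (cstar x)"
    and cstar_mult: "cstar (x * y) = cstar y * cstar x"
    and cstar_identity: "norm (cstar x * x) = norm x * norm x"

definition gdist :: "('v \<Rightarrow> 'v \<Rightarrow> bool) \<Rightarrow> 'v \<Rightarrow> 'v \<Rightarrow> nat" where
  "gdist E x y = (LEAST n. (E ^^ n) x y)"

definition connected_graph :: "('v \<Rightarrow> 'v \<Rightarrow> bool) \<Rightarrow> bool" where
  "connected_graph E \<longleftrightarrow> (\<forall>x y. \<exists>n. (E ^^ n) x y)"

definition diameter :: "('v \<Rightarrow> 'v \<Rightarrow> bool) \<Rightarrow> nat" where
  "diameter E = Max {gdist E x y | x y. True}"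

definition distance_regular ::
  "('v \<Rightarrow> 'v \<Rightarrow> bool) \<Rightarrow> nat \<Rightarrow> (nat \<Rightarrow> nat) \<Rightarrow> (nat \<Rightarrow> nat) \<Rightarrow> bool" where
  "distance_regular E D b c \<longleftrightarrow>
     connected_graph E \<and> diameter E = D \<and>
     (\<forall>v w. gdist E v w < D \<longrightarrow>
        card {x. E w x \<and> gdist E v x = gdist E v w + 1} = b (gdist E v w)) \<and>
     (\<forall>v w. 1 \<le> gdist E v w \<longrightarrow> gdist E v w \<le> D \<longrightarrow>
        card {x. E w x \<and> gdist E v x = gdist E v w - 1} = c (gdist E v w))"

definition has_cycle_of_length :: "('v \<Rightarrow> 'v \<Rightarrow> bool) \<Rightarrow> nat \<Rightarrow> bool" where
  "has_cycle_of_length E k \<longleftrightarrow> 3 \<le> k \<and>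
     (\<exists>f :: nat \<Rightarrow> 'v. inj_on f {..<k} \<and> (\<forall>i<k. E (f i) (f (Suc i mod k))))"

definition girth :: "('v \<Rightarrow> 'v \<Rightarrow> bool) \<Rightarrow> enat" where
  "girth E = (INF k \<in> {k. has_cycle_of_length E k}. enat k)"

definition quantum_aut_rel ::
  "('v::finite \<Rightarrow> 'v \<Rightarrow> bool) \<Rightarrow> ('v \<Rightarrow> 'v \<Rightarrow> 'a::cstar_algebra) \<Rightarrow> bool" where
  "quantum_aut_rel E u \<longleftrightarrow>
     (\<forall>i j. u i j = cstar (u i j) \<and> u i j * u i j = u i j) \<and>
     (\<forall>i. (\<Sum>l\<in>UNIV. u i l) = 1 \<and> (\<Sum>l\<in>UNIV. u l i) = 1) \<and>
     (\<forall>i j k l. E i k \<noteq> E j l \<longrightarrow> u i j * u k l = 0 \<and> u k l * u i j = 0)"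

end

theory Submission
  imports Defs
begin


locale G =
  fixes E :: "'v::finite \<Rightarrow> 'v \<Rightarrow> bool" and D :: nat and b c :: "nat \<Rightarrow> nat"
  assumes sym: "\<forall>x y. E x y = E y x"
    and irrefl: "\<forall>x. \<not> E x x"
    and cubic: "\<forall>x. card {y. E x y} = 3"
    and drg: "distance_regular E D b c"
begin

abbreviation "d \<equiv> gdist E"

lemma conn: "\<exists>n. (E^^n) x y"
  using drg unfolding distance_regular_def connected_graph_def by blast

lemma walk_d: "(E^^(d x y)) x y"
  unfolding gdist_def by (rule LeastI_ex) (rule conn)

lemma d_le: "(E^^n) x y \<Longrightarrow> d x y \<le> n"
  unfolding gdist_def by (rule Least_le)

lemma d0: "d x y = 0 \<longleftrightarrow> x = y"
proof
  assume "d x y = 0" then show "x = y" using walk_d[of x y] by (auto elim: relpowp_0_E)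
next
  assume "x = y" then show "d x y = 0" using d_le[of 0 x y] relpowp_0_I by fastforce
qed

lemma dne: "d x y = n \<Longrightarrow> 0 < n \<Longrightarrow> x \<noteq> y"
  using d0[of x y] by auto

lemma d1: "d x y = 1 \<longleftrightarrow> E x y"
proof
  assume h: "d x y = 1" then show "E x y" using walk_d[of x y] relpowp_1[of E] by metis
next
  assume h: "E x y"
  then have "d x y \<le> 1" using d_le[of 1 x y] relpowp_1[of E] by metis
  moreover have "x \<noteq> y" using h irrefl by auto
  ultimately show "d x y = 1" using d0[of x y] by linarith
qed

lemma walk_sym: "(E^^n) x y \<Longrightarrow> (E^^n) y x"
proof (induction n arbitrary: y)
  case 0 then show ?case by (auto elim: relpowp_0_E intro: relpowp_0_I)
next
  case (Suc n)
  from Suc.prems obtain z where "(E^^n) x z" "E z y" by (auto elim: relpowp_Suc_E)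
  then show ?case using Suc.IH sym by (metis relpowp_Suc_I2)
qed

lemma d_sym: "d x y = d y x"
  using d_le walk_d walk_sym by (meson antisym)

lemma d_step: "E y z \<Longrightarrow> d x z \<le> d x y + 1"
  using d_le[OF relpowp_Suc_I[OF walk_d[of x y]]] by simp

lemma d_step': "E y z \<Longrightarrow> d x y \<le> d x z + 1"
  using d_step sym by blast

lemma d_pred: "d x y = Suc n \<Longrightarrow> \<exists>z. E y z \<and> d x z = n"
proof -
  assume h: "d x y = Suc n"
  from walk_d[of x y] h obtain z where z: "(E^^n) x z" "E z y" by (auto elim: relpowp_Suc_E)
  have "d x z \<le> n" using d_le[OF z(1)] .
  moreover have "d x y \<le> d x z + 1" using d_step[OF z(2)] .
  ultimately show ?thesis using h z(2) sym by (metis add_le_cancel_right le_antisym Suc_eq_plus1)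
qed

lemma d2: "d x y = 2 \<Longrightarrow> \<exists>z. E x z \<and> E z y"
proof -
  assume "d x y = 2"
  then obtain z where "E y z" "d x z = 1" using d_pred[of x y 1] by auto
  then show ?thesis using d1 sym by blast
qed

lemma d_le2: "E x z \<Longrightarrow> E z y \<Longrightarrow> d x y \<le> 2"
proof -
  assume "E x z" "E z y"
  then have "(E^^2) x y" by (metis relpowp_1 relpowp_Suc_I numeral_2_eq_2 One_nat_def)
  then show ?thesis by (rule d_le)
qed

lemma diam: "d x y \<le> D"
proof -
  have "D = Max {gdist E x y | x y. True}" using drg unfolding distance_regular_def diameter_def by simp
  moreover have "finite {gdist E x y | x y. True}"
  proof -
    have "{gdist E x y | x y. True} = (\<lambda>(x,y). gdist E x y) ` UNIV" by auto
    then show ?thesis by simp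
  qed
  ultimately show ?thesis by (auto intro: Max_ge)
qed

lemma bfact: "d v w < D \<Longrightarrow> card {x. E w x \<and> d v x = d v w + 1} = b (d v w)"
  using drg unfolding distance_regular_def by blast

lemma cfact: "1 \<le> d v w \<Longrightarrow> card {x. E w x \<and> d v x = d v w - 1} = c (d v w)"
  using drg diam unfolding distance_regular_def by blast

lemma partition:
  assumes t: "d v w = t" "1 \<le> t" "t < D"
  shows "card {x. E w x \<and> d v x = t} + b t + c t = 3"
proof -
  let ?C = "{x. E w x \<and> d v x = t - 1}" and ?A = "{x. E w x \<and> d v x = t}"
    and ?B = "{x. E w x \<and> d v x = t + 1}"
  have nb: "d v x = t \<or> d v x = t + 1 \<or> d v x = t - 1" if "E w x" for x
  proof -
    have "d v x \<le> d v w + 1" "d v w \<le> d v x + 1" using d_step d_step' that by blast+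
    then show ?thesis using t by linarith
  qed
  have N: "{x. E w x} = ?A \<union> ?B \<union> ?C" using nb by auto
  have f: "finite ?A" "finite ?B" "finite ?C" by auto
  have "card (?A \<union> ?B \<union> ?C) = card (?A \<union> ?B) + card ?C"
    by (rule card_Un_disjoint) (use t(2) in auto)
  moreover have "card (?A \<union> ?B) = card ?A + card ?B"
    by (rule card_Un_disjoint) auto
  ultimately have "card {x. E w x} = card ?A + card ?B + card ?C" unfolding N by simp
  then show ?thesis using cubic bfact[of v w] cfact[of v w] t by auto
qed

lemma card1_ex: "card S = 1 \<Longrightarrow> \<exists>x. x \<in> S"
  by (auto simp: card_1_singleton_iff)

lemma card1_eq: "card S = 1 \<Longrightarrow> x \<in> S \<Longrightarrow> y \<in> S \<Longrightarrow> x = y"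
  by (auto simp: card_1_singleton_iff)

lemma pred_ex: "1 \<le> d v w \<Longrightarrow> \<exists>x. E w x \<and> d v x = d v w - 1"
  using d_pred[of v w "d v w - 1"] by simp

lemma a_zero:
  assumes t: "d v w = t" "1 \<le> t" "t < D" "b t = 2" and x: "E w x"
  shows "d v x \<noteq> t"
proof -
  obtain z where z: "E w z" "d v z = t - 1" using pred_ex[of v w] t by auto
  have "card {x. E w x \<and> d v x = t - 1} = c t" using cfact[of v w] t by simp
  moreover have "card {x. E w x \<and> d v x = t - 1} \<ge> 1"
  proof -
    have "{x. E w x \<and> d v x = t - 1} \<noteq> {}" using z by blast
    then show ?thesis by (simp add: Suc_leI card_gt_0_iff)
  qed
  ultimately have "card {x. E w x \<and> d v x = t} = 0" using partition[OF t(1-3)] t(4) by linarith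
  then have "{x. E w x \<and> d v x = t} = {}" by simp
  then show ?thesis using x by auto
qed

lemma a_one:
  assumes t: "d v w = t" "1 \<le> t" "t < D" "b t = 1" "c t = 1"
  shows "card {x. E w x \<and> d v x = t} = 1"
  using partition[OF t(1-3)] t(4,5) by linarith

lemma uniq_par:
  assumes "c t = 1" "d v w = t" "1 \<le> t" "E w x" "E w y" "d v x = t - 1" "d v y = t - 1"
  shows "x = y"
proof -
  have "card {x. E w x \<and> d v x = t - 1} = 1" using cfact[of v w] assms by simp
  then show ?thesis by (rule card1_eq) (use assms in auto)
qed

lemma uniq_ch:
  assumes "b t = 1" "d v w = t" "t < D" "E w x" "E w y" "d v x = t + 1" "d v y = t + 1"
  shows "x = y"
proof -
  have "card {x. E w x \<and> d v x = t + 1} = 1" using bfact[of v w] assms by simp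
  then show ?thesis by (rule card1_eq) (use assms in auto)
qed

lemma girth_le:
  assumes "distinct xs" "3 \<le> length xs" "\<forall>i<length xs. E (xs!i) (xs!(Suc i mod length xs))"
  shows "girth E \<le> enat (length xs)"
proof -
  have "has_cycle_of_length E (length xs)"
    unfolding has_cycle_of_length_def
    using assms by (auto intro!: exI[of _ "nth xs"] inj_on_nth)
  then show ?thesis unfolding girth_def by (auto intro: INF_lower)
qed

lemma girth6:
  assumes "distinct [a1,a2,a3,a4,a5,a6]" "E a1 a2" "E a2 a3" "E a3 a4" "E a4 a5" "E a5 a6" "E a6 a1"
  shows "girth E \<le> enat 6"
proof -
  have "\<forall>i<6. E ([a1,a2,a3,a4,a5,a6]!i) ([a1,a2,a3,a4,a5,a6]!(Suc i mod 6))"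
  proof (intro allI impI)
    fix i :: nat assume "i < 6"
    then have "i = 0 \<or> i = 1 \<or> i = 2 \<or> i = 3 \<or> i = 4 \<or> i = 5" by linarith
    then show "E ([a1,a2,a3,a4,a5,a6]!i) ([a1,a2,a3,a4,a5,a6]!(Suc i mod 6))"
      using assms by (elim disjE) simp_all
  qed
  then have "girth E \<le> enat (length [a1,a2,a3,a4,a5,a6])" using girth_le[of "[a1,a2,a3,a4,a5,a6]"] assms(1) by simp
  moreover have "length [a1,a2,a3,a4,a5,a6] = 6" by simp
  ultimately show ?thesis by metis
qed

lemma girth5:
  assumes "distinct [a1,a2,a3,a4,a5]" "E a1 a2" "E a2 a3" "E a3 a4" "E a4 a5" "E a5 a1"
  shows "girth E \<le> enat 5"
proof -
  have "\<forall>i<5. E ([a1,a2,a3,a4,a5]!i) ([a1,a2,a3,a4,a5]!(Suc i mod 5))"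
  proof (intro allI impI)
    fix i :: nat assume "i < 5"
    then have "i = 0 \<or> i = 1 \<or> i = 2 \<or> i = 3 \<or> i = 4" by linarith
    then show "E ([a1,a2,a3,a4,a5]!i) ([a1,a2,a3,a4,a5]!(Suc i mod 5))"
      using assms by (elim disjE) simp_all
  qed
  then have "girth E \<le> enat (length [a1,a2,a3,a4,a5])" using girth_le[of "[a1,a2,a3,a4,a5]"] assms(1) by simp
  moreover have "length [a1,a2,a3,a4,a5] = 5" by simp
  ultimately show ?thesis by metis
qed

lemma girth3:
  assumes "distinct [a1,a2,a3]" "E a1 a2" "E a2 a3" "E a3 a1"
  shows "girth E \<le> enat 3"
proof -
  have "\<forall>i<3. E ([a1,a2,a3]!i) ([a1,a2,a3]!(Suc i mod 3))"
  proof (intro allI impI)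
    fix i :: nat assume "i < 3"
    then have "i = 0 \<or> i = 1 \<or> i = 2" by linarith
    then show "E ([a1,a2,a3]!i) ([a1,a2,a3]!(Suc i mod 3))"
      using assms by (elim disjE) simp_all
  qed
  then have "girth E \<le> enat (length [a1,a2,a3])" using girth_le[of "[a1,a2,a3]"] assms(1) by simp
  moreover have "length [a1,a2,a3] = 3" by simp
  ultimately show ?thesis by metis
qed

lemma walk3: "E a1 a2 \<Longrightarrow> E a2 a3 \<Longrightarrow> E a3 a4 \<Longrightarrow> d a1 a4 \<le> 3"
proof -
  assume h: "E a1 a2" "E a2 a3" "E a3 a4"
  have w1: "(E^^1) a1 a2" unfolding relpowp_1 by (rule h(1))
  have w2: "(E^^(Suc 1)) a1 a3" by (rule relpowp_Suc_I[OF w1 h(2)])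
  have w3: "(E^^(Suc (Suc 1))) a1 a4" by (rule relpowp_Suc_I[OF w2 h(3)])
  have "d a1 a4 \<le> Suc (Suc 1)" by (rule d_le[OF w3])
  then show ?thesis by simp
qed

lemma no_b1:
  assumes "b 1 = 1" "2 \<le> D"
  shows False
proof -
  fix v :: 'v
  obtain a1 a2 a3 where N: "{y. E v y} = {a1,a2,a3}" "a1 \<noteq> a2" "a2 \<noteq> a3" "a1 \<noteq> a3"
    using cubic card_3_iff by metis
  have key: "card {x. E w x \<and> E v x} = 1" if w: "E v w" for w
  proof -
    have dw: "d v w = 1" using w d1 by simp
    have "card {x. E w x \<and> d v x = 1} + b 1 + c 1 = 3" using partition[OF dw] assms by simp
    moreover have "c 1 = card {x. E w x \<and> d v x = 1 - 1}" using cfact[of v w] dw by simp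
    moreover have "{x. E w x \<and> d v x = 1 - 1} = {v}" using w sym d0 by auto
    moreover have "{x. E w x \<and> d v x = 1} = {x. E w x \<and> E v x}" using d1 by auto
    ultimately show ?thesis using assms by simp
  qed
  have ex: "\<exists>x. E w x \<and> E v x" and un: "\<And>x y. E w x \<Longrightarrow> E v x \<Longrightarrow> E w y \<Longrightarrow> E v y \<Longrightarrow> x = y"
    if "E v w" for w
  proof -
    have c1: "card {x. E w x \<and> E v x} = 1" using key that by blast
    then have "{x. E w x \<and> E v x} \<noteq> {}" by (intro notI) simp
    then show "\<exists>x. E w x \<and> E v x" by blast
    show "\<And>x y. E w x \<Longrightarrow> E v x \<Longrightarrow> E w y \<Longrightarrow> E v y \<Longrightarrow> x = y"
      by (rule card1_eq[OF c1]) auto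
  qed
  have Nv: "\<And>x. E v x \<longleftrightarrow> x = a1 \<or> x = a2 \<or> x = a3" using N(1) by (simp add: set_eq_iff)
  have irr: "\<not> E a1 a1" "\<not> E a2 a2" "\<not> E a3 a3" using irrefl by auto
  have s12: "E a1 a2 = E a2 a1" and s13: "E a1 a3 = E a3 a1" and s23: "E a2 a3 = E a3 a2" using sym by auto
  have va: "E v a1" "E v a2" "E v a3" using Nv by auto
  have e1: "E a1 a2 \<or> E a1 a3" using ex[OF va(1)] Nv irr by auto
  have e2: "E a2 a1 \<or> E a2 a3" using ex[OF va(2)] Nv irr by auto
  have e3: "E a3 a1 \<or> E a3 a2" using ex[OF va(3)] Nv irr by auto
  have u1: "\<not> (E a1 a2 \<and> E a1 a3)" using un[OF va(1), of a2 a3] va N by blast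
  have u2: "\<not> (E a2 a1 \<and> E a2 a3)" using un[OF va(2), of a1 a3] va N by blast
  have u3: "\<not> (E a3 a1 \<and> E a3 a2)" using un[OF va(3), of a1 a2] va N by blast
  show False using e1 e2 e3 u1 u2 u3 s12 s13 s23 by blast
qed

end

locale G2 = G +
  fixes m :: nat
  assumes m2: "2 \<le> m" and mD: "m < D" and bm1: "b (m - 1) = 2" and bm: "b m = 1" and cm: "c m = 1"
    and gir: "girth E \<ge> enat (2 * m)"
begin

lemma no_tri: "E a1 a2 \<Longrightarrow> E a2 a3 \<Longrightarrow> E a3 a1 \<Longrightarrow> False"
proof -
  assume h: "E a1 a2" "E a2 a3" "E a3 a1"
  have "distinct [a1,a2,a3]" using h irrefl by auto
  then have "girth E \<le> enat 3" using girth3 h by blast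
  with gir have "enat (2 * m) \<le> enat 3" by (rule order_trans)
  then have "2 * m \<le> 3" by simp
  then show False using m2 by linarith
qed

lemma lay_m1: "d v w = m - 1 \<Longrightarrow> E w x \<Longrightarrow> d v x \<noteq> m - 1"
  using a_zero[of v w "m - 1" x] m2 mD bm1 by auto

lemma par_m: "d v w = m \<Longrightarrow> E w x \<Longrightarrow> E w y \<Longrightarrow> d v x = m - 1 \<Longrightarrow> d v y = m - 1 \<Longrightarrow> x = y"
  using uniq_par[of m v w x y] cm m2 by auto

lemma sib_m: "d v w = m \<Longrightarrow> E w x \<Longrightarrow> E w y \<Longrightarrow> d v x = m \<Longrightarrow> d v y = m \<Longrightarrow> x = y"
proof -
  assume h: "d v w = m" "E w x" "E w y" "d v x = m" "d v y = m"
  have "card {x. E w x \<and> d v x = m} = 1" using a_one[OF h(1)] m2 mD bm cm by auto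
  then show "x = y" by (rule card1_eq) (use h in auto)
qed

lemma s_ex:
  assumes ik: "d i k = m"
  shows "\<exists>s. d i s = m - 1 \<and> d s k = 2"
proof -
  have "card {x. E k x \<and> d i x = m} = 1" by (rule a_one[OF ik]) (use m2 mD bm cm in auto)
  then obtain r where r: "E k r" "d i r = m" using card1_ex by blast
  obtain s where s: "E r s" "d i s = m - 1" using d_pred[of i r "m - 1"] r m2 by auto
  obtain p where p: "E k p" "d i p = m - 1" using pred_ex[of i k] ik m2 by auto
  have "d s k \<le> 2" using d_le2[of s r k] s(1) r(1) sym by auto
  moreover have "s \<noteq> k" using s ik m2 by auto
  then have "d s k \<noteq> 0" using d0 by auto
  moreover have "\<not> E s k"
  proof
    assume "E s k"
    then have "s = p" using par_m[OF ik, of s p] sym s p by auto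
    then show False using no_tri[of p k r] p r s sym by auto
  qed
  then have "d s k \<noteq> 1" using d1 by auto
  ultimately have "d s k = 2" by linarith
  then show ?thesis using s by auto
qed

lemma g1:
  assumes jq: "d j q = m - 1" and ql: "E q l" and ql': "E q l'" and jl: "d j l = m" and jl': "d j l' = m"
    and ll: "l \<noteq> l'" and jy: "d j y = m - 1" and yl: "d y l = 2" and yl': "d y l' = 2"
  shows False
proof -
  obtain z1 where z1: "E y z1" "E z1 l" using d2[OF yl] by auto
  obtain z2 where z2: "E y z2" "E z2 l'" using d2[OF yl'] by auto
  have lz: "d j z = m" if "E y z" "E z l'' " "d j l'' = m" for z l''
  proof -
    have "d j z \<le> d j y + 1" using d_step that by blast
    moreover have "d j l'' \<le> d j z + 1" using d_step that by blast
    moreover have "d j z \<noteq> m - 1" using lay_m1[OF jy that(1)] .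
    ultimately show ?thesis using jy that(3) m2 by linarith
  qed
  have jz1: "d j z1 = m" using lz z1 jl by blast
  have jz2: "d j z2 = m" using lz z2 jl' by blast
  have qy: "q \<noteq> y"
  proof
    assume "q = y"
    then have "d q l = 2" using yl by simp
    moreover have "d q l = 1" using ql d1 by blast
    ultimately show False by simp
  qed
  have z12: "z1 \<noteq> z2"
  proof
    assume "z1 = z2"
    then show False using sib_m[OF jz1, of l l'] z1 z2 jl jl' ll by auto
  qed
  have lz2: "l \<noteq> z2"
  proof
    assume "l = z2"
    then show False using par_m[OF jl, of q y] ql z2 sym jq jy qy by auto
  qed
  have lz1: "l' \<noteq> z1"
  proof
    assume "l' = z1"
    then show False using par_m[OF jl', of q y] ql' z1 sym jq jy qy by auto
  qed
  have nqz: "\<not> E q z" if "E y z" "d j z = m" for z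
  proof
    assume "E q z"
    then show False using par_m[OF that(2), of q y] that sym jq jy qy by auto
  qed
  have qz: "d q z = 2" if "E y z" "d j z = m" "E z l''" "E q l''" for z l''
  proof -
    have "d q z \<le> 2" using d_le2[of q l'' z] that sym by auto
    moreover have "q \<noteq> z" using jq that(2) m2 by auto
    then have "d q z \<noteq> 0" using d0 by auto
    moreover have "d q z \<noteq> 1" using nqz[OF that(1,2)] d1 by auto
    ultimately show ?thesis by linarith
  qed
  have qz1: "d q z1 = 2" using qz[of z1 l] z1 jz1 ql by auto
  have qz2: "d q z2 = 2" using qz[of z2 l'] z2 jz2 ql' by auto
  have nqy: "\<not> E q y" using lay_m1[OF jq] jy by auto
  have dqy2: "2 \<le> d q y" using nqy qy d0 d1 by (metis One_nat_def less_2_cases not_less)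
  have dqy3: "d q y \<le> 3" using walk3[of q l z1 y] ql z1 sym by auto
  consider "m = 2" | "m = 3" | "4 \<le> m" using m2 by linarith
  then show False
  proof cases
    case 3
    have dist: "distinct [q,l,z1,y,z2,l']"
      using jq jl jl' jy jz1 jz2 qy ll z12 lz2 lz1 z1 z2 irrefl m2 by auto
    have "girth E \<le> enat 6"
      by (rule girth6[OF dist]) (use ql z1 z2 ql' sym in auto)
    with gir have "enat (2 * m) \<le> enat 6" by (rule order_trans)
    then show False using 3 by simp
  next
    case 1
    have "E j q" "E j y" using jq jy 1 d1 by auto
    then have "d q y \<le> 2" using d_le2[of q j y] sym by auto
    then have qy2: "d q y = 2" using dqy2 by simp
    have "card {x. E y x \<and> d q x = 3} = b 2" using bfact[of q y] qy2 mD 1 by simp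
    then have "card {x. E y x \<and> d q x = 3} = 1" using bm 1 by simp
    then obtain x where x: "E y x" "d q x = 3" using card1_ex by blast
    have "{j, z1, z2} \<subseteq> {x. E y x}" using z1 z2 \<open>E j y\<close> sym by auto
    moreover have "j \<noteq> z1" "j \<noteq> z2" using d0[of j z1] d0[of j z2] jz1 jz2 1 by auto
    then have "card {j, z1, z2} = 3" using z12 by simp
    moreover have "card {x. E y x} = 3" using cubic by blast
    ultimately have "{j, z1, z2} = {x. E y x}" by (intro card_seteq) auto
    then have "x = j \<or> x = z1 \<or> x = z2" using x by auto
    moreover have "d q j = 1" using \<open>E j q\<close> sym d1 by auto
    ultimately show False using x qz1 qz2 by auto
  next
    case 2
    show False
    proof (cases "d q y = 3")
      case True
      have "card {x. E y x \<and> d q x = 3 - 1} = c 3" using cfact[of q y] True by simp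
      then have c1: "card {x. E y x \<and> d q x = 2} = 1" using cm 2 by simp
      have "z1 = z2" by (rule card1_eq[OF c1]) (use z1 z2 qz1 qz2 in auto)
      then show False using z12 by simp
    next
      case False
      then have "d q y = 2" using dqy2 dqy3 by simp
      then obtain w where w: "E q w" "E w y" using d2 by blast
      have "d j w \<le> d j q + 1" "d j q \<le> d j w + 1" using d_step d_step' w(1) by blast+
      moreover have "d j w \<noteq> m - 1" using lay_m1[OF jq w(1)] .
      moreover have "d j w \<noteq> m"
      proof
        assume "d j w = m"
        then show False using par_m[of j w q y] w sym jq jy qy by auto
      qed
      ultimately have jw: "d j w = 1" using jq 2 by linarith
      have dist: "distinct [w,q,l,z1,y]"
        using jw jq jl jy jz1 qy z1 irrefl 2 by auto
      have "girth E \<le> enat 5"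
        by (rule girth5[OF dist]) (use w ql z1 sym in auto)
      with gir have "enat (2 * m) \<le> enat 5" by (rule order_trans)
      then show False using 2 by simp
    qed
  qed
qed

end


lemma cstar_zero: "cstar (0::'a::cstar_algebra) = 0"
proof -
  have "cstar (0::'a) = cstar (0 + 0)" by simp
  also have "\<dots> = cstar 0 + cstar 0" by (rule cstar_add)
  finally show ?thesis by simp
qed

lemma cstar_sum: "cstar (sum f A) = sum (\<lambda>x. cstar (f x :: 'a::cstar_algebra)) A"
  by (induction A rule: infinite_finite_induct) (auto simp: cstar_zero cstar_add)

lemma selfadj_comm:
  fixes A B X :: "'a::cstar_algebra"
  assumes "cstar A = A" "cstar B = B" "cstar X = X" "A * X = X * A" "A * B = A * X"
  shows "A * B = B * A"
proof -
  have "B * A = cstar B * cstar A" using assms by simp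
  also have "\<dots> = cstar (A * B)" by (simp add: cstar_mult)
  also have "\<dots> = cstar (A * X)" using assms by simp
  also have "\<dots> = X * A" using assms by (simp add: cstar_mult)
  also have "\<dots> = A * B" using assms by simp
  finally show ?thesis by simp
qed

lemma rel_R1: "quantum_aut_rel E u \<Longrightarrow> u i j * u i j = u i j"
  unfolding quantum_aut_rel_def by blast
lemma rel_sa: "quantum_aut_rel E u \<Longrightarrow> cstar (u i j) = u i j"
  unfolding quantum_aut_rel_def by metis
lemma rel_row: "quantum_aut_rel E u \<Longrightarrow> (\<Sum>l\<in>UNIV. u i l) = 1"
  unfolding quantum_aut_rel_def by blast
lemma rel_col: "quantum_aut_rel E u \<Longrightarrow> (\<Sum>l\<in>UNIV. u l i) = 1"
  unfolding quantum_aut_rel_def by blast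
lemma rel_R3: "quantum_aut_rel E u \<Longrightarrow> E i k \<noteq> E j l \<Longrightarrow> u i j * u k l = 0"
  unfolding quantum_aut_rel_def by blast

lemma ins_mid: "quantum_aut_rel E u \<Longrightarrow> a * b = (\<Sum>y\<in>UNIV. a * u z y * b)"
proof -
  assume r: "quantum_aut_rel E u"
  have "a * b = a * (\<Sum>y\<in>UNIV. u z y) * b" using rel_row[OF r] by simp
  also have "\<dots> = (\<Sum>y\<in>UNIV. a * u z y * b)" by (simp add: sum_distrib_left sum_distrib_right)
  finally show ?thesis .
qed

lemma ins_right: "quantum_aut_rel E u \<Longrightarrow> a = (\<Sum>y\<in>UNIV. a * u z y)"
proof -
  assume r: "quantum_aut_rel E u"
  have "a = a * (\<Sum>y\<in>UNIV. u z y)" using rel_row[OF r] by simp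
  also have "\<dots> = (\<Sum>y\<in>UNIV. a * u z y)" by (simp add: sum_distrib_left)
  finally show ?thesis .
qed

lemma rel_transp: "quantum_aut_rel E u \<Longrightarrow> quantum_aut_rel E (\<lambda>a b. u b a)"
  unfolding quantum_aut_rel_def by metis

lemma walk_zero:
  fixes u :: "'v::finite \<Rightarrow> 'v \<Rightarrow> 'a::cstar_algebra"
  assumes r: "quantum_aut_rel E u"
  shows "(E^^Suc n) i k \<Longrightarrow> \<not> (E^^Suc n) j l \<Longrightarrow> u i j * u k l = 0"
proof (induction n arbitrary: k l)
  case 0
  then have "E i k" "\<not> E j l" unfolding relpowp_Suc_0 by simp_all
  then show ?case using rel_R3[OF r] by blast
next
  case (Suc n)
  obtain z where z: "(E^^Suc n) i z" "E z k" using Suc.prems(1) by (auto elim: relpowp_Suc_E)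
  have "u i j * u k l = (\<Sum>y\<in>UNIV. u i j * u z y * u k l)" by (rule ins_mid[OF r])
  also have "\<dots> = 0"
  proof (rule sum.neutral, rule ballI)
    fix y :: 'v
    show "u i j * u z y * u k l = 0"
    proof (cases "E y l")
      case True
      have "\<not> (E^^Suc n) j y" using Suc.prems(2) True relpowp_Suc_I by metis
      then have "u i j * u z y = 0" using Suc.IH z(1) by blast
      then show ?thesis by simp
    next
      case False
      then have "u z y * u k l = 0" using rel_R3[OF r] z(2) by blast
      then show ?thesis by (simp add: mult.assoc)
    qed
  qed
  finally show ?case by simp
qed



locale Q = G E D b c for E :: "'v::finite \<Rightarrow> 'v \<Rightarrow> bool" and D b c +
  fixes u :: "'v \<Rightarrow> 'v \<Rightarrow> 'a::cstar_algebra" and m :: nat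
  assumes rel: "quantum_aut_rel E u" and m2q: "2 \<le> m" and mDq: "m \<le> D"
    and hyp: "\<forall>i j k l. gdist E i k = gdist E j l \<and> gdist E i k \<le> m - 1 \<longrightarrow>
                u i j * u k l = u k l * u i j"
begin

lemma DL: "i \<noteq> k \<Longrightarrow> j \<noteq> l \<Longrightarrow> d i k \<noteq> d j l \<Longrightarrow> u i j * u k l = 0"
proof -
  assume h: "i \<noteq> k" "j \<noteq> l" "d i k \<noteq> d j l"
  show ?thesis
  proof (cases "d i k < d j l")
    case True
    obtain n where n: "d i k = Suc n" using h(1) d0 by (metis not0_implies_Suc)
    have w: "(E^^Suc n) i k" using walk_d[of i k] n by simp
    have "\<not> (E^^Suc n) j l" using d_le[of "Suc n" j l] True n by auto
    then show ?thesis using walk_zero[OF rel w] by blast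
  next
    case False
    then have lt: "d j l < d i k" using h(3) by simp
    obtain n where n: "d j l = Suc n" using h(2) d0 by (metis not0_implies_Suc)
    have w: "(E^^Suc n) j l" using walk_d[of j l] n by simp
    have "\<not> (E^^Suc n) i k" using d_le[of "Suc n" i k] lt n by auto
    then show ?thesis using walk_zero[OF rel_transp[OF rel] w] by simp
  qed
qed

lemma comm: "d i k = d j l \<Longrightarrow> d i k \<le> m - 1 \<Longrightarrow> u i j * u k l = u k l * u i j"
  using hyp by blast

lemma AB_P:
  assumes ik: "d i k = m" and jl: "d j l = m" and p: "E k p" "d i p = m - 1"
  shows "u i j * u k l = (\<Sum>q\<in>{q. E l q \<and> d j q = m - 1}. u i j * u p q * u k l)"
proof -
  have "u i j * u k l = (\<Sum>q\<in>UNIV. u i j * u p q * u k l)" by (rule ins_mid[OF rel])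
  also have "\<dots> = (\<Sum>q\<in>{q. E l q \<and> d j q = m - 1}. u i j * u p q * u k l)"
  proof (rule sum.mono_neutral_right)
    show "\<forall>q\<in>UNIV - {q. E l q \<and> d j q = m - 1}. u i j * u p q * u k l = 0"
    proof
    fix q assume "q \<in> UNIV - {q. E l q \<and> d j q = m - 1}"
    then have nq: "\<not> (E l q \<and> d j q = m - 1)" by simp
    show "u i j * u p q * u k l = 0"
    proof (cases "E l q")
      case False
      have "E p k" using p sym by blast
      then have "u p q * u k l = 0" using rel_R3[OF rel, of p k q l] False sym by blast
      then show ?thesis by (simp add: mult.assoc)
    next
      case True
      then have "d j q \<noteq> m - 1" using nq by simp
      moreover have "q \<noteq> j"
      proof
        assume "q = j"
        then have "E j l" using True sym by auto
        then have "d j l = 1" using d1 by blast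
        then show False using jl m2q by simp
      qed
      moreover have "i \<noteq> p" using dne[OF p(2)] m2q by auto
      ultimately have "u i j * u p q = 0" using DL p by metis
      then show ?thesis by simp
    qed
    qed
  qed auto
  finally show ?thesis .
qed

lemma comm_sum:
  fixes a :: "'b::ring" and f :: "'c \<Rightarrow> 'b"
  assumes "\<And>q. q \<in> S \<Longrightarrow> a * f q = f q * a"
  shows "a * (\<Sum>q\<in>S. f q) = (\<Sum>q\<in>S. f q) * a"
proof -
  have "a * (\<Sum>q\<in>S. f q) = (\<Sum>q\<in>S. a * f q)" by (simp add: sum_distrib_left)
  also have "\<dots> = (\<Sum>q\<in>S. f q * a)" using assms by (rule sum.cong[OF refl])
  also have "\<dots> = (\<Sum>q\<in>S. f q) * a" by (simp add: sum_distrib_right)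
  finally show ?thesis .
qed

lemma sa_sum: "cstar (\<Sum>q\<in>S. u p q) = (\<Sum>q\<in>S. u p q)"
  by (simp add: cstar_sum rel_sa[OF rel])

lemma case1:
  assumes b1: "b (m - 1) = 1" and ik: "d i k = m" and jl: "d j l = m"
  shows "u i j * u k l = u k l * u i j"
proof -
  obtain p where p: "E k p" "d i p = m - 1" using pred_ex[of i k] ik m2q by auto
  define QQ where "QQ = {q. E l q \<and> d j q = m - 1}"
  have AB: "u i j * u k l = (\<Sum>q\<in>QQ. u i j * u p q * u k l)"
    unfolding QQ_def by (rule AB_P[OF ik jl p])
  have each: "u i j * u p q * u k l = u i j * u p q" if q: "q \<in> QQ" for q
  proof -
    have lq: "E l q" "d j q = m - 1" using q unfolding QQ_def by auto
    have "u i j * u p q = (\<Sum>l'\<in>UNIV. u i j * u p q * u k l')" by (rule ins_right[OF rel])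
    also have "\<dots> = (\<Sum>l'\<in>{l}. u i j * u p q * u k l')"
    proof (rule sum.mono_neutral_right)
      show "\<forall>l'\<in>UNIV - {l}. u i j * u p q * u k l' = 0"
      proof
        fix l' assume "l' \<in> UNIV - {l}"
        then have ll: "l' \<noteq> l" by simp
        show "u i j * u p q * u k l' = 0"
        proof (cases "E q l'")
          case False
          have "E p k" using p sym by blast
          then have "u p q * u k l' = 0" using rel_R3[OF rel, of p k q l'] False by blast
          then show ?thesis by (simp add: mult.assoc)
        next
          case True
          have ndl: "d j l' \<noteq> m"
          proof
            assume "d j l' = m"
            then have "l = l'"
              using uniq_ch[of "m - 1" j q l l'] b1 lq True sym jl m2q mDq by auto
            then show False using ll by simp
          qed
          have jl': "j \<noteq> l'"
          proof
            assume "j = l'"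
            then have "E j q" using True sym by auto
            then have "d j q = 1" using d1 by blast
            then have "m = 2" using lq m2q by simp
            then show False using no_b1 b1 mDq by simp
          qed
          have "u i j * u p q = u p q * u i j" using comm[of i p j q] p lq by simp
          moreover have "u i j * u k l' = 0" using DL[OF dne[OF ik] jl' ] ik ndl m2q by simp
          ultimately show ?thesis by (metis mult.assoc mult_zero_right)
        qed
      qed
    qed auto
    finally show ?thesis by simp
  qed
  have "u i j * u k l = (\<Sum>q\<in>QQ. u i j * u p q)" using AB each by simp
  also have "\<dots> = u i j * (\<Sum>q\<in>QQ. u p q)" by (simp add: sum_distrib_left)
  finally have AB2: "u i j * u k l = u i j * (\<Sum>q\<in>QQ. u p q)" .
  show ?thesis
  proof (rule selfadj_comm[OF rel_sa[OF rel] rel_sa[OF rel] sa_sum _ AB2])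
    show "u i j * (\<Sum>q\<in>QQ. u p q) = (\<Sum>q\<in>QQ. u p q) * u i j"
      by (rule comm_sum) (use comm[of i p j] p QQ_def in auto)
  qed
qed

end

locale Q2 = Q +
  assumes q_mD: "m < D" and q_bm1: "b (m - 1) = 2" and q_bm: "b m = 1" and q_cm: "c m = 1"
    and q_gir: "girth E \<ge> enat (2 * m)"
begin

sublocale G2 E D b c m
  by unfold_locales (use m2q q_mD q_bm1 q_bm q_cm q_gir in auto)

lemma case2:
  assumes ik: "d i k = m" and jl: "d j l = m"
  shows "u i j * u k l = u k l * u i j"
proof -
  obtain p where p: "E k p" "d i p = m - 1" using pred_ex[of i k] ik m2q by auto
  obtain q where q: "E l q" "d j q = m - 1" using pred_ex[of j l] jl m2q by auto
  have Qq: "{q'. E l q' \<and> d j q' = m - 1} = {q}"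
  proof (rule set_eqI, rule iffI)
    fix x assume "x \<in> {q'. E l q' \<and> d j q' = m - 1}"
    then have "E l x" "d j x = m - 1" by auto
    then have "x = q" using par_m[OF jl \<open>E l x\<close> q(1) \<open>d j x = m - 1\<close> q(2)] by simp
    then show "x \<in> {q}" by simp
  qed (use q in auto)
  have AP0: "u i j * u k l = u i j * u p q * u k l" using AB_P[OF ik jl p] Qq by simp
  obtain s where s: "d i s = m - 1" "d s k = 2" using s_ex[OF ik] by blast
  define Y where "Y = {y. d j y = m - 1 \<and> d y l = 2}"
  define SY where "SY = (\<Sum>y\<in>Y. u s y)"
  have sk: "s \<noteq> k" using dne[OF s(2)] by simp
  have is_: "i \<noteq> s" using dne[OF s(1)] m2q by simp
  have ik': "i \<noteq> k" using dne[OF ik] m2q by simp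
  have jl'': "j \<noteq> l" using dne[OF jl] m2q by simp
  have AS: "u i j * u k l = u i j * SY * u k l"
  proof -
    have "u i j * u k l = (\<Sum>y\<in>UNIV. u i j * u s y * u k l)" by (rule ins_mid[OF rel])
    also have "\<dots> = (\<Sum>y\<in>Y. u i j * u s y * u k l)"
    proof (rule sum.mono_neutral_right)
      show "\<forall>y\<in>UNIV - Y. u i j * u s y * u k l = 0"
      proof
        fix y assume "y \<in> UNIV - Y"
        then have ny: "\<not> (d j y = m - 1 \<and> d y l = 2)" unfolding Y_def by simp
        show "u i j * u s y * u k l = 0"
        proof (cases "d j y = m - 1")
          case False
          show ?thesis
          proof (cases "y = j")
            case True
            show ?thesis
            proof (cases "m = 2")
              case True
              then have "E i s" using s(1) d1 by simp
              then have "u i j * u s y = 0" using rel_R3[OF rel, of i s j y] \<open>y = j\<close> irrefl by auto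
              then show ?thesis by simp
            next
              case False
              have "u s y * u k l = 0" using DL[OF sk] \<open>y = j\<close> jl'' s(2) jl False by simp
              then show ?thesis by (simp add: mult.assoc)
            qed
          next
            case False
            have "u i j * u s y = 0" using DL[OF is_] False s(1) \<open>d j y \<noteq> m - 1\<close> by metis
            then show ?thesis by simp
          qed
        next
          case True
          then have yl: "d y l \<noteq> 2" using ny by simp
          have "y \<noteq> l" using True jl m2q by auto
          then have "u s y * u k l = 0" using DL[OF sk] s(2) yl by metis
          then show ?thesis by (simp add: mult.assoc)
        qed
      qed
    qed auto
    also have "\<dots> = u i j * SY * u k l" unfolding SY_def by (simp add: sum_distrib_left sum_distrib_right)
    finally show ?thesis .
  qed
  have ASc: "u i j * SY = SY * u i j"
    unfolding SY_def by (rule comm_sum) (use comm[of i s j] s(1) Y_def in auto)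
  have AP: "u i j * u p q = u p q * u i j" using comm[of i p j q] p q by simp
  have dpk: "d p k = 1" using p sym d1 by auto
  have PC: "u p q * u k l' = u k l' * u p q" if "E q l'" for l'
  proof -
    have "d q l' = 1" using that d1 by blast
    then show ?thesis using comm[of p k q l'] dpk m2q by simp
  qed
  have PP: "u p q * u p q = u p q" by (rule rel_R1[OF rel])
  define P where "P = u p q"
  define A where "A = u i j"
  define B where "B = u k l"
  define X where "X = P * SY * P"
  have AXB: "A * X * u k l' = 0" if l': "l' \<noteq> l" for l'
  proof (cases "E q l'")
    case False
    have "E p k" using p sym by blast
    then have "P * u k l' = 0" unfolding P_def using rel_R3[OF rel, of p k q l'] False by blast
    then show ?thesis unfolding X_def by (simp add: mult.assoc)
  next
    case True
    have Z: "A * SY * u k l' = 0"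
    proof -
      have "A * SY * u k l' = (\<Sum>y\<in>Y. A * u s y * u k l')"
        unfolding SY_def by (simp add: sum_distrib_left sum_distrib_right)
      also have "\<dots> = 0"
      proof (rule sum.neutral, rule ballI)
        fix y assume "y \<in> Y"
        then have y: "d j y = m - 1" "d y l = 2" unfolding Y_def by auto
        show "A * u s y * u k l' = 0"
        proof (cases "d j l' = m")
          case True
          have "d y l' \<noteq> 2"
          proof
            assume "d y l' = 2"
            show False by (rule g1[OF q(2) _ \<open>E q l'\<close> jl True l'[symmetric] y \<open>d y l' = 2\<close>]) (use q sym in auto)
          qed
          moreover have "y \<noteq> l'" using y True m2q by auto
          ultimately have "u s y * u k l' = 0" using DL[OF sk] s(2) by metis
          then show ?thesis by (simp add: mult.assoc)
        next
          case False
          show ?thesis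
          proof (cases "l' = j")
            case True
            then have "E j q" using \<open>E q l'\<close> sym by auto
            then have "d j q = 1" using d1 by blast
            then have "m = 2" using q m2q by simp
            have "y \<noteq> j" using dne[OF y(1)] \<open>m = 2\<close> by auto
            moreover have "d y j = 1" using y(1) \<open>m = 2\<close> d_sym[of y j] by simp
            ultimately have "u s y * u k l' = 0" using DL[OF sk] s(2) True by simp
            then show ?thesis by (simp add: mult.assoc)
          next
            case False
            have "A * u k l' = 0" unfolding A_def using DL[OF ik' False[symmetric]] ik \<open>d j l' \<noteq> m\<close> by metis
            moreover have "A * u s y = u s y * A" unfolding A_def using comm[of i s j y] s y by simp
            ultimately show ?thesis by (metis mult.assoc mult_zero_right)
          qed
        qed
      qed
      finally show ?thesis .
    qed
    have PC': "P * u k l' = u k l' * P" unfolding P_def by (rule PC[OF True])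
    have "A * X * u k l' = A * P * SY * (P * u k l')" unfolding X_def by (simp add: mult.assoc)
    also have "\<dots> = A * P * SY * (u k l' * P)" using PC' by simp
    also have "\<dots> = (A * P) * (SY * u k l') * P" by (simp add: mult.assoc)
    also have "\<dots> = (P * A) * (SY * u k l') * P" using AP unfolding A_def P_def by simp
    also have "\<dots> = P * (A * SY * u k l') * P" by (simp add: mult.assoc)
    also have "\<dots> = 0" using Z by simp
    finally show ?thesis .
  qed
  have "E q l" using q(1) sym by blast
  then have PB: "P * B = B * P" unfolding P_def B_def by (rule PC)
  have AX_l: "A * X * B = A * B"
  proof -
    have "A * X * B = A * P * SY * (P * B)" unfolding X_def by (simp add: mult.assoc)
    also have "\<dots> = A * P * SY * (B * P)" using PB by simp
    also have "\<dots> = (A * P) * (SY * B) * P" by (simp add: mult.assoc)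
    also have "\<dots> = (P * A) * (SY * B) * P" using AP unfolding A_def P_def by simp
    also have "\<dots> = P * (A * SY * B) * P" by (simp add: mult.assoc)
    also have "\<dots> = P * (A * B) * P" using AS unfolding A_def B_def by simp
    also have "\<dots> = P * A * (B * P)" by (simp add: mult.assoc)
    also have "\<dots> = P * A * (P * B)" using PB by simp
    also have "\<dots> = P * (A * P) * B" by (simp add: mult.assoc)
    also have "\<dots> = P * (P * A) * B" using AP unfolding A_def P_def by simp
    also have "\<dots> = (P * P) * A * B" by (simp add: mult.assoc)
    also have "\<dots> = P * A * B" using PP unfolding P_def by simp
    also have "\<dots> = A * P * B" using AP unfolding A_def P_def by simp
    also have "\<dots> = A * B" using AP0 unfolding A_def B_def P_def by simp
    finally show ?thesis .
  qed
  have AX: "A * B = A * X"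
  proof -
    have "A * X = (\<Sum>l'\<in>UNIV. A * X * u k l')" by (rule ins_right[OF rel])
    also have "\<dots> = (\<Sum>l'\<in>{l}. A * X * u k l')"
      by (rule sum.mono_neutral_right) (use AXB in auto)
    also have "\<dots> = A * B" using AX_l unfolding B_def by simp
    finally show ?thesis by simp
  qed
  have saX: "cstar X = X"
    unfolding X_def P_def SY_def by (simp add: cstar_mult rel_sa[OF rel] sa_sum mult.assoc)
  have cX: "A * X = X * A"
  proof -
    have "A * X = (A * P) * SY * P" unfolding X_def by (simp add: mult.assoc)
    also have "\<dots> = P * (A * SY) * P" using AP unfolding A_def P_def by (simp add: mult.assoc)
    also have "\<dots> = P * SY * (A * P)" using ASc unfolding A_def by (simp add: mult.assoc)
    also have "\<dots> = P * SY * (P * A)" using AP unfolding A_def P_def by simp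
    also have "\<dots> = X * A" unfolding X_def by (simp add: mult.assoc)
    finally show ?thesis .
  qed
  have saA: "cstar A = A" unfolding A_def by (rule rel_sa[OF rel])
  have saB: "cstar B = B" unfolding B_def by (rule rel_sa[OF rel])
  show ?thesis
    using selfadj_comm[OF saA saB saX cX AX] unfolding A_def B_def .
qed

end


theorem lemma5p4:
  fixes E :: "'v::finite \<Rightarrow> 'v \<Rightarrow> bool"
    and u :: "'v \<Rightarrow> 'v \<Rightarrow> 'a::cstar_algebra"
    and D m :: nat and b c :: "nat \<Rightarrow> nat"
  assumes sym: "\<forall>x y. E x y = E y x"
    and irrefl: "\<forall>x. \<not> E x x"
    and cubic: "\<forall>x. card {y. E x y} = 3"
    and drg: "distance_regular E D b c"
    and m: "2 \<le> m" "m \<le> D"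
    and rel: "quantum_aut_rel E u"
    and hyp: "\<forall>i j k l. gdist E i k = gdist E j l \<and> gdist E i k \<le> m - 1 \<longrightarrow>
                u i j * u k l = u k l * u i j"
    and cond: "b (m - 1) = 1 \<or>
               (m < D \<and> b (m - 1) = 2 \<and> b m = 1 \<and> c m = 1 \<and> girth E \<ge> enat (2 * m))"
  shows "\<forall>i j k l. gdist E i k = m \<and> gdist E j l = m \<longrightarrow>
           u i j * u k l = u k l * u i j"
proof (intro allI impI, elim conjE)
  fix i j k l assume ik: "gdist E i k = m" and jl: "gdist E j l = m"
  interpret Q E D b c u m
    by unfold_locales (use sym irrefl cubic drg m rel hyp in auto)
  from cond show "u i j * u k l = u k l * u i j"
  proof
    assume "b (m - 1) = 1"
    then show ?thesis using case1 ik jl by blast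
  next
    assume h: "m < D \<and> b (m - 1) = 2 \<and> b m = 1 \<and> c m = 1 \<and> girth E \<ge> enat (2 * m)"
    interpret Q2 E D b c u m
      by unfold_locales (use h in auto)
    show ?thesis using case2 ik jl by blast
  qed
qed

end
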